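(* In the free-group setting described in the context, the extension $\pi_Y\circ\pi_f:X_f\to Y$ is point-distal.
   Context: Let $r\ge2$ and $\Gamma=F_r$ free on $S=\{a,b,a_3,\dots,a_r\}$. $Y$ is the Gromov boundary (infinite reduced words in $S\cup S^{-1}$, $\Gamma$ acting by concatenation and cancellation). For nontrivial $s\in\Gamma$, $y\in Y$ starts with $s$ if $y=sy'$ with the last letter of $s$ not inverse to the first letter of $y'$; $V_s$ is the set of such $y$; $a^\infty$ is the constant word $a$. Let $\{\Gamma_n\}$ be strictly decreasing finite-index normal subgroups with trivial intersection, $Z=\varprojlim\Gamma/\Gamma_n$ with left translation, $\pi_n:Z\to\Gamma/\Gamma_n$, $X=Y\times Z$ with product action, $\pi_Y:X\to Y$ the projection. For $n\ge2$ choose $\gamma_n\in\Gamma_{n-1}\setminus\Gamma_n$; $u_n=a^nba^{-n}b^{-1}$, $D_n=V_{u_n}$, $C_n=\pi_n^{-1}(\gamma_n\Gamma_n)$, $X_+=\bigcup_{n\ge2}D_n\times C_n$, $X_-=X\setminus(X_+\cup\{(a^\infty,e_\Gamma)\})$, $f=\pm1$ on $X_\pm$. $\pi_f:X_f\to X$ is the McMahon extension: the (unique up to conjugacy) minimal continuous action on a compact metrizable space with equivariant continuous surjection whose fibers are single points off $\Gamma(a^\infty,e_\Gamma)$ and two points on it, such that $f\circ\pi_f$ extends continuously to $X_f$. An extension $\pi:\tilde X\to Y$ is point-distal if there is $x\in\tilde X$ with dense orbit such that for every $x'\ne x$ with $\pi(x')=\pi(x)$ the orbit closure of $(x,x')$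 in $\tilde X^2$ misses the diagonal. *)

theory Defs
  imports "HOL-Analysis.Analysis" "HOL-Algebra.Algebra"
begin

text \<open>A letter is (i, inverted?) with i < r; generator index 0 is a, index 1 is b,
  indices 2..r-1 are a_3,...,a_r.\<close>
type_synonym gen = "nat \<times> bool"

definition letters :: "nat \<Rightarrow> gen set" where
  "letters r = {x. fst x < r}"

definition inv_gen :: "gen \<Rightarrow> gen" where
  "inv_gen x = (fst x, \<not> snd x)"

fun reduced :: "gen list \<Rightarrow> bool" where
  "reduced (x # y # xs) = (y \<noteq> inv_gen x \<and> reduced (y # xs))"
| "reduced _ = True"

definition red_cons :: "gen \<Rightarrow> gen list \<Rightarrow> gen list" where
  "red_cons x w = (case w of [] \<Rightarrow> [x] | y # ys \<Rightarrow> (if y = inv_gen x then ys else x # w))"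

definition FG :: "nat \<Rightarrow> gen list monoid" where
  "FG r = \<lparr>carrier = {w. set w \<subseteq> letters r \<and> reduced w},
           mult = (\<lambda>u v. foldr red_cons u v), one = []\<rparr>"

definition gen_a :: gen where "gen_a = (0, False)"
definition gen_b :: gen where "gen_b = (1, False)"

definition u_word :: "nat \<Rightarrow> gen list" where
  "u_word n = replicate n gen_a @ [gen_b] @ replicate n (inv_gen gen_a) @ [inv_gen gen_b]"

definition Ybd :: "nat \<Rightarrow> (nat \<Rightarrow> gen) set" where
  "Ybd r = {y. \<forall>n. y n \<in> letters r \<and> y (Suc n) \<noteq> inv_gen (y n)}"

definition Ytop :: "nat \<Rightarrow> (nat \<Rightarrow> gen) topology" where
  "Ytop r = subtopology (product_topology (\<lambda>_. discrete_topology UNIV) UNIV) (Ybd r)"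

definition bact_gen :: "gen \<Rightarrow> (nat \<Rightarrow> gen) \<Rightarrow> (nat \<Rightarrow> gen)" where
  "bact_gen x y = (if y 0 = inv_gen x then (\<lambda>n. y (Suc n))
                   else (\<lambda>n. if n = 0 then x else y (n - 1)))"

definition bact :: "gen list \<Rightarrow> (nat \<Rightarrow> gen) \<Rightarrow> (nat \<Rightarrow> gen)" where
  "bact w y = foldr bact_gen w y"

definition Vset :: "nat \<Rightarrow> gen list \<Rightarrow> (nat \<Rightarrow> gen) set" where
  "Vset r s = {y. \<exists>y' \<in> Ybd r. y' 0 \<noteq> inv_gen (last s) \<and>
                 y = (\<lambda>n. if n < length s then s ! n else y' (n - length s))}"

definition a_inf :: "nat \<Rightarrow> gen" where "a_inf = (\<lambda>_. gen_a)"

definition Zset :: "nat \<Rightarrow> (nat \<Rightarrow> gen list set) \<Rightarrow> (nat \<Rightarrow> gen list set) set" where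
  "Zset r Gs = {z. \<forall>n. z n \<in> {g <#\<^bsub>FG r\<^esub> Gs n | g. g \<in> carrier (FG r)}
                     \<and> z (Suc n) \<subseteq> z n}"

definition Ztop :: "nat \<Rightarrow> (nat \<Rightarrow> gen list set) \<Rightarrow> (nat \<Rightarrow> gen list set) topology" where
  "Ztop r Gs = subtopology (product_topology (\<lambda>_. discrete_topology UNIV) UNIV) (Zset r Gs)"

definition zact :: "nat \<Rightarrow> gen list \<Rightarrow> (nat \<Rightarrow> gen list set) \<Rightarrow> (nat \<Rightarrow> gen list set)" where
  "zact r g z = (\<lambda>n. g <#\<^bsub>FG r\<^esub> z n)"

definition zid :: "nat \<Rightarrow> (nat \<Rightarrow> gen list set) \<Rightarrow> (nat \<Rightarrow> gen list set)" where
  "zid r Gs = (\<lambda>n. \<one>\<^bsub>FG r\<^esub> <#\<^bsub>FG r\<^esub> Gs n)"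

definition Xtop where "Xtop r Gs = prod_topology (Ytop r) (Ztop r Gs)"

definition xact where "xact r g p = (bact g (fst p), zact r g (snd p))"

definition x0 where "x0 r Gs = (a_inf, zid r Gs)"

definition Cset where
  "Cset r Gs \<gamma> n = {z \<in> Zset r Gs. z n = \<gamma> n <#\<^bsub>FG r\<^esub> Gs n}"

definition Xplus where
  "Xplus r Gs \<gamma> = (\<Union>n\<in>{2..}. Vset r (u_word n) \<times> Cset r Gs \<gamma> n)"

definition Xminus where
  "Xminus r Gs \<gamma> = topspace (Xtop r Gs) - (Xplus r Gs \<gamma> \<union> {x0 r Gs})"

text \<open>f = 1 on X_+, -1 on X_- (only meaningful off the point x0)\<close>
definition ffun :: "nat \<Rightarrow> (nat \<Rightarrow> gen list set) \<Rightarrow> (nat \<Rightarrow> gen list) \<Rightarrow>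
     (nat \<Rightarrow> gen) \<times> (nat \<Rightarrow> gen list set) \<Rightarrow> real" where
  "ffun r Gs \<gamma> p = (if p \<in> Xplus r Gs \<gamma> then 1 else if p \<in> Xminus r Gs \<gamma> then -1 else 0)"

definition x0_orbit where
  "x0_orbit r Gs = {xact r g (x0 r Gs) | g. g \<in> carrier (FG r)}"

definition minimal_action :: "('g, 'm) monoid_scheme \<Rightarrow> 'x topology \<Rightarrow> ('g \<Rightarrow> 'x \<Rightarrow> 'x) \<Rightarrow> bool" where
  "minimal_action G T act \<longleftrightarrow>
     (\<forall>A. closedin T A \<and> A \<noteq> {} \<and> (\<forall>g\<in>carrier G. \<forall>x\<in>A. act g x \<in> A) \<longrightarrow> A = topspace T)"

definition continuous_action :: "('g, 'm) monoid_scheme \<Rightarrow> 'x topology \<Rightarrow> ('g \<Rightarrow> 'x \<Rightarrow> 'x) \<Rightarrow> bool" where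
  "continuous_action G T act \<longleftrightarrow>
     (\<forall>g\<in>carrier G. continuous_map T T (act g)) \<and>
     (\<forall>x\<in>topspace T. act \<one>\<^bsub>G\<^esub> x = x) \<and>
     (\<forall>g\<in>carrier G. \<forall>h\<in>carrier G. \<forall>x\<in>topspace T. act (g \<otimes>\<^bsub>G\<^esub> h) x = act g (act h x))"

definition orbit_of :: "('g, 'm) monoid_scheme \<Rightarrow> ('g \<Rightarrow> 'x \<Rightarrow> 'x) \<Rightarrow> 'x \<Rightarrow> 'x set" where
  "orbit_of G act x = {act g x | g. g \<in> carrier G}"

definition point_distal :: "('g, 'm) monoid_scheme \<Rightarrow> 'x topology \<Rightarrow> ('g \<Rightarrow> 'x \<Rightarrow> 'x) \<Rightarrow> ('x \<Rightarrow> 'y) \<Rightarrow> bool" where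
  "point_distal G T act \<pi> \<longleftrightarrow>
     (\<exists>x\<in>topspace T. T closure_of (orbit_of G act x) = topspace T \<and>
        (\<forall>x'\<in>topspace T. x' \<noteq> x \<and> \<pi> x' = \<pi> x \<longrightarrow>
           (prod_topology T T) closure_of (orbit_of G (\<lambda>g (p, q). (act g p, act g q)) (x, x'))
             \<inter> {(y, y) | y. y \<in> topspace T} = {}))"

end

theory Submission
  imports Defs
begin

lemma inv_inv[simp]: "inv_gen (inv_gen x) = x" by (simp add: inv_gen_def)
lemma inv_neq[simp]: "inv_gen x \<noteq> x" by (cases x) (simp add: inv_gen_def)
lemma reduced_tl: "reduced (y # ys) \<Longrightarrow> reduced ys" by (cases ys) auto
lemma red_cons_reduced: "reduced w \<Longrightarrow> reduced (red_cons x w)"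
  by (cases w) (auto simp: red_cons_def intro: reduced_tl)
lemma red_cons_set: "set (red_cons x w) \<subseteq> insert x (set w)"
  by (cases w) (auto simp: red_cons_def)
lemma mult_reduced: "reduced b \<Longrightarrow> reduced (foldr red_cons a b)"
  by (induction a) (auto intro: red_cons_reduced)
lemma mult_set: "set a \<subseteq> L \<Longrightarrow> set b \<subseteq> L \<Longrightarrow> set (foldr red_cons a b) \<subseteq> L"
  by (induction a) (use red_cons_set in fastforce)+
lemma cancel1: "reduced w \<Longrightarrow> red_cons (inv_gen x) (red_cons x w) = w"
proof (cases w)
  case (Cons y ys) assume r: "reduced w"
  show ?thesis
  proof (cases "y = inv_gen x")
    case True
    then show ?thesis using r Cons by (cases ys) (auto simp: red_cons_def)
  next
    case False then show ?thesis using Cons by (auto simp: red_cons_def)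
  qed
qed (auto simp: red_cons_def)
lemma cancel: "reduced a \<Longrightarrow> foldr red_cons (rev (map inv_gen g)) (foldr red_cons g a) = a"
  by (induction g) (auto simp: cancel1 mult_reduced)
lemma right_unit: "reduced g \<Longrightarrow> foldr red_cons g [] = g"
proof (induction g)
  case (Cons x g) then show ?case by (cases g) (auto simp: red_cons_def intro: reduced_tl)
qed simp
lemma FG_mult[simp]: "mult (FG r) u v = foldr red_cons u v" by (simp add: FG_def)
lemma FG_one[simp]: "one (FG r) = []" by (simp add: FG_def)
lemma FG_carrier: "carrier (FG r) = {w. set w \<subseteq> letters r \<and> reduced w}" by (simp add: FG_def)
lemma FG_closed: "g \<in> carrier (FG r) \<Longrightarrow> h \<in> carrier (FG r) \<Longrightarrow> g \<otimes>\<^bsub>FG r\<^esub> h \<in> carrier (FG r)"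
  by (simp add: FG_carrier mult_reduced mult_set)
lemma coset_inj:
  assumes "\<forall>a\<in>A. reduced a" "\<forall>a\<in>B. reduced a" "g <#\<^bsub>FG r\<^esub> A = g <#\<^bsub>FG r\<^esub> B"
  shows "A = B"
proof -
  let ?h = "\<lambda>c. foldr red_cons (rev (map inv_gen g)) c"
  have "\<And>A. \<forall>a\<in>A. reduced a \<Longrightarrow> ?h ` (g <#\<^bsub>FG r\<^esub> A) = A"
    by (auto simp: l_coset_def cancel image_iff)
  from this[of A] this[of B] assms show ?thesis by metis
qed


lemma l_coset_one: "\<forall>a\<in>A. reduced a \<Longrightarrow> [] <#\<^bsub>FG r\<^esub> A = A"
  by (auto simp: l_coset_def)

lemma Zset_reduced: "z \<in> Zset r Gs \<Longrightarrow> (\<And>n. Gs n \<subseteq> carrier (FG r)) \<Longrightarrow> \<forall>a\<in>z n. reduced a"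
proof
  fix a assume z: "z \<in> Zset r Gs" and G: "\<And>n. Gs n \<subseteq> carrier (FG r)" and a: "a \<in> z n"
  from z obtain g where "z n = g <#\<^bsub>FG r\<^esub> Gs n" unfolding Zset_def by blast
  with a obtain h where "h \<in> Gs n" "a = foldr red_cons g h" by (auto simp: l_coset_def)
  moreover have "reduced h" using G[of n] \<open>h \<in> Gs n\<close> by (auto simp: FG_carrier)
  ultimately show "reduced a" by (simp add: mult_reduced)
qed

lemma topspace_Xtop: "topspace (Xtop r Gs) = Ybd r \<times> Zset r Gs"
  by (simp add: Xtop_def Ytop_def Ztop_def)

lemma openin_prod_eq_set:
  assumes "\<And>c. openin T {u \<in> topspace T. \<phi> u = c}"
  shows "openin (prod_topology T T) {w \<in> topspace (prod_topology T T). \<phi> (fst w) = \<phi> (snd w)}"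
proof -
  have "{w \<in> topspace (prod_topology T T). \<phi> (fst w) = \<phi> (snd w)}
      = (\<Union>c. {u \<in> topspace T. \<phi> u = c} \<times> {u \<in> topspace T. \<phi> u = c})"
    by (auto simp: topspace_prod_topology)
  moreover have "openin (prod_topology T T) ({u \<in> topspace T. \<phi> u = c} \<times> {u \<in> topspace T. \<phi> u = c})" for c
    using assms by (simp add: openin_prod_Times_iff)
  ultimately show ?thesis by (metis (no_types, lifting) openin_Union imageE)
qed
theorem lemma5p3:
  fixes r :: nat
    and Gs :: "nat \<Rightarrow> gen list set"
    and \<gamma> :: "nat \<Rightarrow> gen list"
    and T :: "'x topology"
    and act :: "gen list \<Rightarrow> 'x \<Rightarrow> 'x"
    and \<pi>f :: "'x \<Rightarrow> (nat \<Rightarrow> gen) \<times> (nat \<Rightarrow> gen list set)"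
  assumes r2: "r \<ge> 2"
    and Gs_normal: "\<And>n. Gs n \<lhd> FG r"
    and Gs_index: "\<And>n. finite (rcosets\<^bsub>FG r\<^esub> Gs n)"
    and Gs_decr: "\<And>n. Gs (Suc n) \<subset> Gs n"
    and Gs_int: "(\<Inter>n. Gs n) = {\<one>\<^bsub>FG r\<^esub>}"
    and \<gamma>_mem: "\<And>n. n \<ge> 2 \<Longrightarrow> \<gamma> n \<in> Gs (n - 1) - Gs n"
    and T_cpt: "compact_space T"
    and T_metr: "metrizable_space T"
    and act_cont: "continuous_action (FG r) T act"
    and act_min: "minimal_action (FG r) T act"
    and \<pi>f_cont: "continuous_map T (Xtop r Gs) \<pi>f"
    and \<pi>f_surj: "\<pi>f ` topspace T = topspace (Xtop r Gs)"
    and \<pi>f_equiv: "\<And>g x. g \<in> carrier (FG r) \<Longrightarrow> x \<in> topspace T \<Longrightarrow> \<pi>f (act g x) = xact r g (\<pi>f x)"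
    and \<pi>f_fibres: "\<And>p. p \<in> topspace (Xtop r Gs) \<Longrightarrow>
        card {x \<in> topspace T. \<pi>f x = p} = (if p \<in> x0_orbit r Gs then 2 else 1)"
    and f_ext: "\<exists>F. continuous_map T euclideanreal F \<and>
        (\<forall>x\<in>topspace T. \<pi>f x \<noteq> x0 r Gs \<longrightarrow> F x = ffun r Gs \<gamma> (\<pi>f x))"
  shows "point_distal (FG r) T act (\<lambda>x. fst (\<pi>f x))"
proof -
  have Gsub: "\<And>n. Gs n \<subseteq> carrier (FG r)"
    using Gs_normal by (meson normal_imp_subgroup subgroup.subset)
  have one_in: "[] \<in> Gs n" for n
  proof -
    have "subgroup (Gs n) (FG r)" by (rule normal_imp_subgroup[OF Gs_normal])
    from subgroup.one_closed[OF this] show ?thesis by simp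
  qed
  have Gsred: "\<forall>a\<in>Gs n. reduced a" for n using Gsub[of n] by (auto simp: FG_carrier)
  define binf where "binf = (\<lambda>_::nat. gen_b)"
  define p where "p = (binf, zid r Gs)"
  have binf_Y: "binf \<in> Ybd r" using r2
    by (auto simp: binf_def Ybd_def letters_def gen_b_def inv_gen_def)
  have zidn: "zid r Gs n = Gs n" for n
    by (simp add: zid_def l_coset_one Gsred)
  have one_c': "[] \<in> carrier (FG r)" by (simp add: FG_carrier)
  have zid_Z: "zid r Gs \<in> Zset r Gs"
    unfolding Zset_def
  proof (rule CollectI, rule allI, rule conjI)
    fix n
    show "zid r Gs n \<in> {g <#\<^bsub>FG r\<^esub> Gs n |g. g \<in> carrier (FG r)}"
      unfolding zid_def FG_one using one_c' by blast
  next
    fix n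
    show "zid r Gs (Suc n) \<subseteq> zid r Gs n" using Gs_decr[of n] by (simp add: zidn)
  qed
  have p_top: "p \<in> topspace (Xtop r Gs)" by (simp add: topspace_Xtop p_def binf_Y zid_Z)
  have p_notorb: "p \<notin> x0_orbit r Gs"
  proof
    assume "p \<in> x0_orbit r Gs"
    then obtain g where g: "g \<in> carrier (FG r)" "p = xact r g (x0 r Gs)" by (auto simp: x0_orbit_def)
    hence z: "zact r g (zid r Gs) = zid r Gs" and b: "bact g a_inf = binf"
      by (simp_all add: p_def xact_def x0_def)
    have "g \<in> Gs n" for n
    proof -
      have "zact r g (zid r Gs) n = zid r Gs n" using z by simp
      hence "g <#\<^bsub>FG r\<^esub> Gs n = Gs n" by (simp add: zact_def zidn)
      moreover have "g \<otimes>\<^bsub>FG r\<^esub> [] \<in> g <#\<^bsub>FG r\<^esub> Gs n" using one_in[of n] by (auto simp: l_coset_def)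
      moreover have "g \<otimes>\<^bsub>FG r\<^esub> [] = g" using g by (simp add: FG_carrier right_unit)
      ultimately show ?thesis by simp
    qed
    hence "g \<in> (\<Inter>n. Gs n)" by blast
    hence "g = []" using Gs_int by simp
    hence "a_inf = binf" using b by (simp add: bact_def)
    hence "a_inf 0 = binf 0" by simp
    thus False by (simp add: a_inf_def binf_def gen_a_def gen_b_def)
  qed
  obtain x where x: "x \<in> topspace T" "\<pi>f x = p" using \<pi>f_surj p_top by (metis imageE)
  have "card {x \<in> topspace T. \<pi>f x = p} = 1" using \<pi>f_fibres[OF p_top] p_notorb by simp
  then obtain x1 where "{x \<in> topspace T. \<pi>f x = p} = {x1}" by (rule card_1_singletonE)
  hence fib: "{x \<in> topspace T. \<pi>f x = p} = {x}" using x by auto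
  have actT: "\<And>g y. g \<in> carrier (FG r) \<Longrightarrow> y \<in> topspace T \<Longrightarrow> act g y \<in> topspace T"
  proof -
    fix g y assume g: "g \<in> carrier (FG r)" and y: "y \<in> topspace T"
    have "continuous_map T T (act g)" using act_cont g by (simp add: continuous_action_def)
    from continuous_map_funspace[OF this] y show "act g y \<in> topspace T" by blast
  qed
  have ac2: "\<forall>x\<in>topspace T. act \<one>\<^bsub>FG r\<^esub> x = x"
    by (rule act_cont[unfolded continuous_action_def, THEN conjunct2, THEN conjunct1])
  have ac3: "\<forall>g\<in>carrier (FG r). \<forall>h\<in>carrier (FG r). \<forall>x\<in>topspace T. act (g \<otimes>\<^bsub>FG r\<^esub> h) x = act g (act h x)"
    by (rule act_cont[unfolded continuous_action_def, THEN conjunct2, THEN conjunct2])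
  have act1: "act [] x = x" using ac2 x(1) by simp
  have actm: "\<And>g h y. g \<in> carrier (FG r) \<Longrightarrow> h \<in> carrier (FG r) \<Longrightarrow> y \<in> topspace T \<Longrightarrow>
      act g (act h y) = act (g \<otimes>\<^bsub>FG r\<^esub> h) y"
    using ac3 by simp
  have one_c: "[] \<in> carrier (FG r)" by (simp add: FG_carrier)
  show ?thesis unfolding point_distal_def
  proof (intro bexI[of _ x] conjI ballI impI)
    show "x \<in> topspace T" by (rule x(1))
    define Orb where "Orb = orbit_of (FG r) act x"
    have Osub: "Orb \<subseteq> topspace T" using actT x(1) by (auto simp: Orb_def orbit_of_def)
    have xO: "x \<in> Orb" using act1 one_c by (force simp: Orb_def orbit_of_def)
    have Oinv: "act g ` Orb \<subseteq> Orb" if "g \<in> carrier (FG r)" for g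
      using that actm x(1) FG_closed by (fastforce simp: Orb_def orbit_of_def)
    have h1: "closedin T (T closure_of Orb)" by simp
    have h2: "T closure_of Orb \<noteq> {}" using xO Osub closure_of_subset by fastforce
    have h3: "\<forall>g\<in>carrier (FG r). \<forall>y\<in>T closure_of Orb. act g y \<in> T closure_of Orb"
    proof (intro ballI)
      fix g y assume g: "g \<in> carrier (FG r)" and y: "y \<in> T closure_of Orb"
      have cm: "continuous_map T T (act g)" using act_cont g by (simp add: continuous_action_def)
      have "act g y \<in> T closure_of (act g ` Orb)"
        using continuous_map_image_closure_subset[OF cm] y by blast
      also have "\<dots> \<subseteq> T closure_of Orb" by (rule closure_of_mono[OF Oinv[OF g]])
      finally show "act g y \<in> T closure_of Orb" .
    qed
    have "T closure_of Orb = topspace T"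
      by (rule act_min[unfolded minimal_action_def, rule_format, OF conjI[OF h1 conjI[OF h2 h3]]])
    thus "T closure_of orbit_of (FG r) act x = topspace T" by (simp add: Orb_def)
  next
    fix x' assume x'T: "x' \<in> topspace T" and x': "x' \<noteq> x \<and> fst (\<pi>f x') = fst (\<pi>f x)"
    have px': "\<pi>f x' \<in> Ybd r \<times> Zset r Gs"
      using continuous_map_funspace[OF \<pi>f_cont] x'T topspace_Xtop by blast
    have "snd (\<pi>f x') \<noteq> zid r Gs"
    proof
      assume "snd (\<pi>f x') = zid r Gs"
      hence "\<pi>f x' = p" using x' x(2) by (simp add: p_def prod_eq_iff)
      hence "x' \<in> {x \<in> topspace T. \<pi>f x = p}" using x'T by simp
      thus False using fib x' by simp
    qed
    then obtain n where n: "snd (\<pi>f x') n \<noteq> zid r Gs n" by (meson ext)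
    define \<phi> where "\<phi> = (\<lambda>u. snd (\<pi>f u) n)"
    have c1: "continuous_map (Xtop r Gs) (Ztop r Gs) snd"
      unfolding Xtop_def by (rule continuous_map_snd)
    have c2: "continuous_map (Ztop r Gs) (discrete_topology UNIV) (\<lambda>z. z n)"
      unfolding Ztop_def
      by (rule continuous_map_from_subtopology)
         (rule continuous_map_product_projection[where X="\<lambda>_. discrete_topology UNIV", simplified], simp)
    have cphi: "continuous_map T (discrete_topology UNIV) \<phi>"
      using continuous_map_compose[OF continuous_map_compose[OF \<pi>f_cont c1] c2]
      by (simp add: \<phi>_def o_def)
    have oph: "openin T {u \<in> topspace T. \<phi> u = c}" for c
      using openin_continuous_map_preimage[OF cphi, of "{c}"] by simp
    define C where "C = topspace (prod_topology T T) -
        {w \<in> topspace (prod_topology T T). \<phi> (fst w) = \<phi> (snd w)}"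
    have Ccl: "closedin (prod_topology T T) C"
      unfolding C_def by (rule closedin_diff[OF closedin_topspace openin_prod_eq_set[OF oph]])
    have zx_red: "\<forall>a\<in>snd (\<pi>f x) n. reduced a" using x(2) zid_Z Zset_reduced Gsub
      by (simp add: p_def)
    have zx'_red: "\<forall>a\<in>snd (\<pi>f x') n. reduced a" using px' Zset_reduced Gsub by auto
    have orbC: "orbit_of (FG r) (\<lambda>g (p, q). (act g p, act g q)) (x, x') \<subseteq> C"
    proof
      fix w assume "w \<in> orbit_of (FG r) (\<lambda>g (p, q). (act g p, act g q)) (x, x')"
      then obtain g where g: "g \<in> carrier (FG r)" and w: "w = (act g x, act g x')"
        by (auto simp: orbit_of_def)
      have e1: "\<phi> (act g x) = g <#\<^bsub>FG r\<^esub> snd (\<pi>f x) n"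
        using \<pi>f_equiv[OF g x(1)] by (simp add: \<phi>_def xact_def zact_def)
      have e2: "\<phi> (act g x') = g <#\<^bsub>FG r\<^esub> snd (\<pi>f x') n"
        using \<pi>f_equiv[OF g x'T] by (simp add: \<phi>_def xact_def zact_def)
      have "\<phi> (act g x) \<noteq> \<phi> (act g x')"
      proof
        assume "\<phi> (act g x) = \<phi> (act g x')"
        hence "g <#\<^bsub>FG r\<^esub> snd (\<pi>f x) n = g <#\<^bsub>FG r\<^esub> snd (\<pi>f x') n" using e1 e2 by simp
        hence "snd (\<pi>f x) n = snd (\<pi>f x') n" by (rule coset_inj[OF zx_red zx'_red])
        thus False using n x(2) by (simp add: p_def)
      qed
      thus "w \<in> C" using w g actT x(1) x'T by (simp add: C_def)
    qed
    have "prod_topology T T closure_of orbit_of (FG r) (\<lambda>g (p, q). (act g p, act g q)) (x, x') \<subseteq> C"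
      by (rule closure_of_minimal[OF orbC Ccl])
    thus "prod_topology T T closure_of orbit_of (FG r) (\<lambda>g (p, q). (act g p, act g q)) (x, x') \<inter>
          {(y, y) |y. y \<in> topspace T} = {}"
      by (auto simp: C_def)
  qed
qed
end
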